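(* Let $\mathfrak{T}:\Omega\to\mathcal{LP}$ be the map $\omega\mapsto\mathsf{E}_\omega$. Then the pushforward map $\mathfrak{T}_*:\mathcal{M}_p(\Omega)\to\mathcal{M}_p(\mathcal{LP})$, $\nu\mapsto\nu(\mathfrak{T}^{-1}(\cdot))$, is well-defined and is a bijection.
   Context: $\Omega$ is the set of $\omega=(\alpha^+,\alpha^-,\gamma_1,\gamma_2)$ with $\alpha^\pm=(\alpha_1^\pm\ge\alpha_2^\pm\ge\dots\ge0)$, $\sum_i(\alpha_i^+)^2+\sum_i(\alpha_i^-)^2<\infty$, $\gamma_1\in\mathbb{R}$, $\gamma_2\ge0$; it is topologised by coordinate-wise convergence of $(\alpha^+,\alpha^-,\gamma_1,\delta)$ with $\delta=\gamma_2+\sum_i(\alpha_i^+)^2+\sum_i(\alpha_i^-)^2$. For $\omega\in\Omega$, $\mathsf{E}_\omega(z)=e^{-\gamma_1 z-\frac{\gamma_2}{2}z^2}\prod_{i}e^{z\alpha_i^+}(1-z\alpha_i^+)\prod_{i}e^{-z\alpha_i^-}(1+z\alpha_i^-)$; $\mathcal{LP}=\{\mathsf{E}_\omega:\omega\in\Omega\}$ with the topology of uniform convergence on compact subsets of $\mathbb{C}$. For a topological space $\mathfrak{X}$, $\mathcal{M}_p(\mathfrak{X})$ is the set of Borel probability measures on $\mathfrak{X}$. *)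

theory Defs
  imports "HOL-Analysis.Analysis" "HOL-Probability.Probability"
begin

text \<open>A point omega = (alpha+, alpha-, gamma1, gamma2); sequences indexed from 0.\<close>
type_synonym omega = "(nat \<Rightarrow> real) \<times> (nat \<Rightarrow> real) \<times> real \<times> real"

definition Omega :: "omega set" where
  "Omega = {(ap, am, g1, g2).
      antimono ap \<and> (\<forall>i. ap i \<ge> 0) \<and> antimono am \<and> (\<forall>i. am i \<ge> 0) \<and>
      summable (\<lambda>i. (ap i)\<^sup>2) \<and> summable (\<lambda>i. (am i)\<^sup>2) \<and> g2 \<ge> 0}"

definition delta :: "omega \<Rightarrow> real" where
  "delta \<omega> = (case \<omega> of (ap, am, g1, g2) \<Rightarrow>
      g2 + (\<Sum>i. (ap i)\<^sup>2) + (\<Sum>i. (am i)\<^sup>2))"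

text \<open>Embedding omega |-> (alpha+, alpha-, gamma1, delta); the product type carries
  the product topology (coordinatewise convergence).\<close>
definition Omega_coords :: "omega \<Rightarrow> (nat \<Rightarrow> real) \<times> (nat \<Rightarrow> real) \<times> real \<times> real" where
  "Omega_coords \<omega> = (case \<omega> of (ap, am, g1, g2) \<Rightarrow> (ap, am, g1, delta \<omega>))"

definition Omega_top :: "omega topology" where
  "Omega_top = pullback_topology Omega Omega_coords euclidean"

definition E :: "omega \<Rightarrow> complex \<Rightarrow> complex" where
  "E \<omega> z = (case \<omega> of (ap, am, g1, g2) \<Rightarrow>
      exp (- of_real g1 * z - of_real g2 / 2 * z\<^sup>2)
      * (\<Prod>i. exp (z * of_real (ap i)) * (1 - z * of_real (ap i)))
      * (\<Prod>i. exp (- z * of_real (am i)) * (1 + z * of_real (am i))))"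

definition LP :: "(complex \<Rightarrow> complex) set" where
  "LP = E ` Omega"

definition uc_nbhd :: "(complex \<Rightarrow> complex) \<Rightarrow> complex set \<Rightarrow> real \<Rightarrow> (complex \<Rightarrow> complex) set" where
  "uc_nbhd f K e = {g. \<exists>d<e. \<forall>z\<in>K. cmod (g z - f z) \<le> d}"

definition compact_uniform_top :: "(complex \<Rightarrow> complex) topology" where
  "compact_uniform_top = topology_generated_by {uc_nbhd f K e | f K e. compact K \<and> e > 0}"

definition LP_top :: "(complex \<Rightarrow> complex) topology" where
  "LP_top = subtopology compact_uniform_top LP"

definition borel_of :: "'a topology \<Rightarrow> 'a measure" where
  "borel_of X = sigma (topspace X) {U. openin X U}"

definition Mp :: "'a topology \<Rightarrow> 'a measure set" where
  "Mp X = {M. sets M = sets (borel_of X) \<and> prob_space M}"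

end

theory Submission
  imports Defs
begin

definition H :: "complex \<Rightarrow> complex" where
  "H w = exp (w + w\<^sup>2 / 2) * (1 - w)"

lemma H_deriv: "(H has_field_derivative (- (u\<^sup>2) * exp (u + u\<^sup>2/2))) (at u within S)"
  unfolding H_def
  by (auto intro!: derivative_eq_intros simp: algebra_simps power2_eq_square)

lemma norm_exp_le: "cmod (exp (v::complex)) \<le> exp (cmod v)"
  by (metis abs_le_D1 abs_Re_le_cmod exp_le_cancel_iff norm_exp_eq_Re)

lemma H_bound: "cmod (H w - 1) \<le> cmod w ^ 3 * exp (cmod w + (cmod w)\<^sup>2 / 2)"
proof -
  let ?B = "(cmod w)\<^sup>2 * exp (cmod w + (cmod w)\<^sup>2 / 2)"
  have "cmod (H w - H 0) \<le> ?B * cmod (w - 0)"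
  proof (rule field_differentiable_bound[of "closed_segment 0 w"])
    show "convex (closed_segment 0 w)" by simp
    show "\<And>x. x \<in> closed_segment 0 w \<Longrightarrow> (H has_field_derivative (- (x\<^sup>2) * exp (x + x\<^sup>2/2))) (at x within closed_segment 0 w)"
      by (rule H_deriv)
    fix x assume x: "x \<in> closed_segment 0 w"
    then have nx: "cmod x \<le> cmod w"
      by (metis norm_minus_commute diff_zero segment_bound1)
    have "cmod (- (x\<^sup>2) * exp (x + x\<^sup>2/2)) = (cmod x)\<^sup>2 * cmod (exp (x + x\<^sup>2/2))"
      by (simp add: norm_mult norm_power)
    also have "\<dots> \<le> (cmod w)\<^sup>2 * exp (cmod w + (cmod w)\<^sup>2 / 2)"
    proof (rule mult_mono)
      show "(cmod x)\<^sup>2 \<le> (cmod w)\<^sup>2" using nx by (simp add: power_mono)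
      have "cmod (x + x\<^sup>2/2) \<le> cmod x + (cmod x)\<^sup>2/2"
        using norm_triangle_ineq[of x "x\<^sup>2/2"] by (simp add: norm_divide norm_power)
      also have "\<dots> \<le> cmod w + (cmod w)\<^sup>2 / 2" using nx by (intro add_mono divide_right_mono power_mono) auto
      finally show "cmod (exp (x + x\<^sup>2/2)) \<le> exp (cmod w + (cmod w)\<^sup>2 / 2)"
        using norm_exp_le order_trans by fastforce
    qed auto
    finally show "cmod (- (x\<^sup>2) * exp (x + x\<^sup>2/2)) \<le> ?B" .
  qed auto
  moreover have "H 0 = 1" by (simp add: H_def)
  ultimately show ?thesis by (simp add: power2_eq_square power3_eq_cube mult_ac)
qed

lemma space_borel_of: "space (borel_of X) = topspace X"
  unfolding borel_of_def by (rule space_measure_of) (auto dest: openin_subset)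

lemma sets_borel_of: "sets (borel_of X) = sigma_sets (topspace X) {U. openin X U}"
  unfolding borel_of_def by (rule sets_measure_of) (auto dest: openin_subset)

lemma open_in_borel_of: "openin X U \<Longrightarrow> U \<in> sets (borel_of X)"
  unfolding sets_borel_of by auto

lemma closed_in_borel_of: "closedin X C \<Longrightarrow> C \<in> sets (borel_of X)"
proof -
  assume "closedin X C"
  then have "C \<subseteq> topspace X" "openin X (topspace X - C)" by (auto simp: closedin_def)
  then have "topspace X - C \<in> sigma_sets (topspace X) {U. openin X U}"
    by (intro sigma_sets.Basic) auto
  then have "topspace X - (topspace X - C) \<in> sigma_sets (topspace X) {U. openin X U}"
    by (rule sigma_sets.Compl)
  moreover have "topspace X - (topspace X - C) = C" using \<open>C \<subseteq> topspace X\<close> by auto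
  ultimately show ?thesis by (simp add: sets_borel_of)
qed

lemma continuous_map_measurable_borel_of:
  assumes "continuous_map X Y f"
  shows "f \<in> borel_of X \<rightarrow>\<^sub>M borel_of Y"
  unfolding borel_of_def[of Y]
proof (rule measurable_measure_of)
  show "{U. openin Y U} \<subseteq> Pow (topspace Y)" by (auto dest: openin_subset)
  show "f \<in> space (borel_of X) \<rightarrow> topspace Y"
    using assms by (auto simp: space_borel_of continuous_map_def)
  fix A assume "A \<in> {U. openin Y U}"
  moreover have "{x \<in> topspace X. f x \<in> A} = f -` A \<inter> topspace X" by auto
  moreover have "openin X {x \<in> topspace X. f x \<in> A}"
    using openin_continuous_map_preimage[OF assms] \<open>A \<in> {U. openin Y U}\<close> by simp
  ultimately have "openin X (f -` A \<inter> topspace X)" by simp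
  then show "f -` A \<inter> space (borel_of X) \<in> sets (borel_of X)"
    by (simp add: space_borel_of open_in_borel_of)
qed

lemma image_borel_of:
  assumes cont: "continuous_map X Y f" and inj: "inj_on f (topspace X)"
    and surj: "f ` topspace X = topspace Y"
    and K: "\<And>n::nat. compactin X (K n)" and KU: "(\<Union>n. K n) = topspace X"
    and haus: "Hausdorff_space Y"
    and A: "A \<in> sets (borel_of X)"
  shows "f ` A \<in> sets (borel_of Y)"
proof -
  have fX: "\<And>x. x \<in> topspace X \<Longrightarrow> f x \<in> topspace Y" using surj by blast
  have closed_img: "f ` C \<in> sets (borel_of Y)" if "closedin X C" for C
  proof -
    have "C \<subseteq> topspace X" using that closedin_subset by auto
    then have "C = (\<Union>n. C \<inter> K n)" using KU by auto
    then have eq: "f ` C = (\<Union>n. f ` (C \<inter> K n))" by blast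
    have "f ` (C \<inter> K n) \<in> sets (borel_of Y)" for n
    proof -
      have "compactin X (C \<inter> K n)"
        using closed_Int_compactin K that by blast
      then have "compactin Y (f ` (C \<inter> K n))" using image_compactin cont by blast
      then have "closedin Y (f ` (C \<inter> K n))" using compactin_imp_closedin haus by blast
      then show ?thesis by (rule closed_in_borel_of)
    qed
    then show ?thesis unfolding eq by blast
  qed
  let ?S = "{A. A \<subseteq> topspace X \<and> f ` A \<in> sigma_sets (topspace Y) {U. openin Y U}}"
  have "sigma_sets (topspace X) {U. openin X U} \<subseteq> ?S"
  proof
    fix A assume "A \<in> sigma_sets (topspace X) {U. openin X U}"
    then show "A \<in> ?S"
    proof induction
      case (Basic U)
      then have U: "openin X U" by simp
      then have "closedin X (topspace X - U)" by (simp add: closedin_diff)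
      then have c: "f ` (topspace X - U) \<in> sigma_sets (topspace Y) {U. openin Y U}"
        using closed_img sets_borel_of by blast
      have sub: "U \<subseteq> topspace X" using openin_subset[OF U] .
      have "f ` U = topspace Y - f ` (topspace X - U)"
      proof
        show "f ` U \<subseteq> topspace Y - f ` (topspace X - U)"
          using sub inj fX by (auto simp: inj_on_def)
        show "topspace Y - f ` (topspace X - U) \<subseteq> f ` U"
          using surj by blast
      qed
      then have "f ` U \<in> sigma_sets (topspace Y) {U. openin Y U}"
        using c by (simp add: sigma_sets.Compl)
      then show ?case using openin_subset[OF U] by simp
    next
      case Empty
      then show ?case by (simp add: sigma_sets.Empty)
    next
      case (Compl a)
      have "f ` (topspace X - a) = topspace Y - f ` a"
      proof
        show "f ` (topspace X - a) \<subseteq> topspace Y - f ` a"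
          using Compl inj fX by (auto simp: inj_on_def)
        show "topspace Y - f ` a \<subseteq> f ` (topspace X - a)"
          using surj by blast
      qed
      then show ?case using Compl by (simp add: sigma_sets.Compl)
    next
      case (Union a)
      have "f ` (\<Union>i. a i) = (\<Union>i. f ` (a i))" by blast
      then show ?case using Union by (auto intro: sigma_sets.Union)
    qed
  qed
  then show ?thesis using A by (auto simp: sets_borel_of)
qed

lemma pushforward_bij:
  assumes cont: "continuous_map X Y f" and inj: "inj_on f (topspace X)"
    and surj: "f ` topspace X = topspace Y"
    and K: "\<And>n::nat. compactin X (K n)" and KU: "(\<Union>n. K n) = topspace X"
    and haus: "Hausdorff_space Y"
  shows "f \<in> borel_of X \<rightarrow>\<^sub>M borel_of Y
    \<and> (\<forall>\<nu>\<in>Mp X. distr \<nu> (borel_of Y) f \<in> Mp Y)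
    \<and> bij_betw (\<lambda>\<nu>. distr \<nu> (borel_of Y) f) (Mp X) (Mp Y)"
proof -
  have meas: "f \<in> borel_of X \<rightarrow>\<^sub>M borel_of Y"
    by (rule continuous_map_measurable_borel_of[OF cont])
  have img: "f ` A \<in> sets (borel_of Y)" if "A \<in> sets (borel_of X)" for A
    using image_borel_of[OF cont inj surj K KU haus that] .
  define g where "g = inv_into (topspace X) f"
  have gf: "g (f x) = x" if "x \<in> topspace X" for x
    using inj that by (simp add: g_def)
  have fg: "f (g y) = y" if "y \<in> topspace Y" for y
    using surj that by (simp add: g_def f_inv_into_f)
  have gX: "g y \<in> topspace X" if "y \<in> topspace Y" for y
    using surj that by (metis g_def inv_into_into)
  have gmeas: "g \<in> borel_of Y \<rightarrow>\<^sub>M borel_of X"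
  proof (rule measurableI)
    show "g x \<in> space (borel_of X)" if "x \<in> space (borel_of Y)" for x
      using that gX by (simp add: space_borel_of)
    fix A assume A: "A \<in> sets (borel_of X)"
    then have "A \<subseteq> topspace X" using sets.sets_into_space space_borel_of by metis
    have fX: "\<And>x. x \<in> topspace X \<Longrightarrow> f x \<in> topspace Y" using surj by blast
    have "g -` A \<inter> space (borel_of Y) = f ` A"
    proof (intro set_eqI iffI)
      fix y assume "y \<in> g -` A \<inter> space (borel_of Y)"
      then have "y \<in> topspace Y" "g y \<in> A" by (auto simp: space_borel_of)
      then show "y \<in> f ` A" using fg by (metis imageI)
    next
      fix y assume "y \<in> f ` A"
      then obtain a where a: "a \<in> A" "y = f a" by blast
      then have "a \<in> topspace X" using \<open>A \<subseteq> topspace X\<close> by blast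
      then show "y \<in> g -` A \<inter> space (borel_of Y)"
        using a gf fX by (simp add: space_borel_of)
    qed
    then show "g -` A \<inter> space (borel_of Y) \<in> sets (borel_of Y)" using img A by simp
  qed
  have inMp: "distr \<nu> (borel_of Y) f \<in> Mp Y" if "\<nu> \<in> Mp X" for \<nu>
  proof -
    have s: "sets \<nu> = sets (borel_of X)" using that by (simp add: Mp_def)
    have m: "f \<in> \<nu> \<rightarrow>\<^sub>M borel_of Y"
      using meas measurable_cong_sets[OF s refl[of "sets (borel_of Y)"]] by simp
    have "prob_space \<nu>" using that by (simp add: Mp_def)
    then have "prob_space (distr \<nu> (borel_of Y) f)"
      using m by (rule prob_space.prob_space_distr)
    then show ?thesis by (simp add: Mp_def)
  qed
  have injd: "inj_on (\<lambda>\<nu>. distr \<nu> (borel_of Y) f) (Mp X)"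
  proof (rule inj_onI)
    fix \<mu> \<nu> assume mu: "\<mu> \<in> Mp X" and nu: "\<nu> \<in> Mp X"
      and eq: "distr \<mu> (borel_of Y) f = distr \<nu> (borel_of Y) f"
    have smu: "sets \<mu> = sets (borel_of X)" and snu: "sets \<nu> = sets (borel_of X)"
      using mu nu by (auto simp: Mp_def)
    have mmu: "f \<in> \<mu> \<rightarrow>\<^sub>M borel_of Y" using meas measurable_cong_sets[OF smu refl[of "sets (borel_of Y)"]] by simp
    have mnu: "f \<in> \<nu> \<rightarrow>\<^sub>M borel_of Y" using meas measurable_cong_sets[OF snu refl[of "sets (borel_of Y)"]] by simp
    show "\<mu> = \<nu>"
    proof (rule measure_eqI)
      show "sets \<mu> = sets \<nu>" using smu snu by simp
      fix A assume A: "A \<in> sets \<mu>"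
      then have AX: "A \<subseteq> topspace X" using smu sets.sets_into_space space_borel_of by metis
      have pre: "f -` (f ` A) \<inter> topspace X = A"
        using inj AX by (auto simp: inj_on_def)
      have fA: "f ` A \<in> sets (borel_of Y)" using img A smu by simp
      have spmu: "space \<mu> = topspace X"
        using smu space_borel_of sets_eq_imp_space_eq by metis
      have spnu: "space \<nu> = topspace X"
        using snu space_borel_of sets_eq_imp_space_eq by metis
      have "emeasure \<mu> A = emeasure (distr \<mu> (borel_of Y) f) (f ` A)"
        using emeasure_distr[OF mmu fA] pre spmu by simp
      also have "\<dots> = emeasure (distr \<nu> (borel_of Y) f) (f ` A)" using eq by simp
      also have "\<dots> = emeasure \<nu> A"
        using emeasure_distr[OF mnu fA] pre spnu by simp
      finally show "emeasure \<mu> A = emeasure \<nu> A" .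
    qed
  qed
  have surjd: "(\<lambda>\<nu>. distr \<nu> (borel_of Y) f) ` Mp X = Mp Y"
  proof
    show "(\<lambda>\<nu>. distr \<nu> (borel_of Y) f) ` Mp X \<subseteq> Mp Y" using inMp by blast
    show "Mp Y \<subseteq> (\<lambda>\<nu>. distr \<nu> (borel_of Y) f) ` Mp X"
    proof
      fix \<mu> assume mu: "\<mu> \<in> Mp Y"
      have smu: "sets \<mu> = sets (borel_of Y)" using mu by (simp add: Mp_def)
      have gm: "g \<in> \<mu> \<rightarrow>\<^sub>M borel_of X" using gmeas measurable_cong_sets[OF smu refl[of "sets (borel_of X)"]] by simp
      let ?\<nu> = "distr \<mu> (borel_of X) g"
      have "prob_space ?\<nu>" using mu gm by (simp add: Mp_def prob_space.prob_space_distr)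
      then have nuM: "?\<nu> \<in> Mp X" by (simp add: Mp_def)
      have "distr ?\<nu> (borel_of Y) f = distr \<mu> (borel_of Y) (f \<circ> g)"
        using distr_distr[OF meas gm] by simp
      also have "\<dots> = distr \<mu> (borel_of Y) (\<lambda>x. x)"
      proof (rule distr_cong)
        fix y assume "y \<in> space \<mu>"
        then have "y \<in> topspace Y" using smu space_borel_of sets_eq_imp_space_eq by metis
        then show "(f \<circ> g) y = y" using fg by simp
      qed auto
      also have "\<dots> = \<mu>"
        using distr_id2[of "borel_of Y" \<mu>] smu by simp
      finally show "\<mu> \<in> (\<lambda>\<nu>. distr \<nu> (borel_of Y) f) ` Mp X" using nuM by force
    qed
  qed
  show ?thesis using meas inMp injd surjd by (simp add: bij_betw_def)
qed

definition Aset :: "real \<Rightarrow> (nat \<Rightarrow> real) set" where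
  "Aset D = {a. antimono a \<and> (\<forall>i. 0 \<le> a i) \<and> (\<forall>N. (\<Sum>i<N. (a i)\<^sup>2) \<le> D)}"

lemma Aset_D_nonneg: "a \<in> Aset D \<Longrightarrow> 0 \<le> D"
  unfolding Aset_def by (metis (mono_tags, lifting) lessThan_0 mem_Collect_eq sum.empty)

lemma Aset_sq_bound:
  assumes "a \<in> Aset D"
  shows "(a k)\<^sup>2 \<le> D / real (Suc k)"
proof -
  have am: "antimono a" and nn: "\<And>i. 0 \<le> a i" and ps: "\<And>N. (\<Sum>i<N. (a i)\<^sup>2) \<le> D"
    using assms by (auto simp: Aset_def)
  have "(\<Sum>i<Suc k. (a k)\<^sup>2) \<le> (\<Sum>i<Suc k. (a i)\<^sup>2)"
  proof (rule sum_mono)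
    fix i assume "i \<in> {..<Suc k}"
    then have "a k \<le> a i" using am by (simp add: antimono_def)
    then show "(a k)\<^sup>2 \<le> (a i)\<^sup>2" using nn by (simp add: power_mono)
  qed
  also have "\<dots> \<le> D" by (rule ps)
  finally have "real (Suc k) * (a k)\<^sup>2 \<le> D" by simp
  then show ?thesis by (simp add: field_simps del: of_nat_Suc)
qed

lemma Aset_bound:
  assumes "a \<in> Aset D"
  shows "a k \<le> sqrt (D / real (Suc k))" "a k \<le> sqrt D" "0 \<le> a k"
proof -
  show 1: "a k \<le> sqrt (D / real (Suc k))" using Aset_sq_bound[OF assms] by (rule real_le_rsqrt)
  have "D / real (Suc k) \<le> D / 1"
    by (rule divide_left_mono) (use Aset_D_nonneg[OF assms] in auto)
  then have "D / real (Suc k) \<le> D" by simp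
  then show "a k \<le> sqrt D" using 1 real_sqrt_le_iff order_trans by blast
  show "0 \<le> a k" using assms by (simp add: Aset_def)
qed

lemma summable_sqrt_cube:
  assumes "0 \<le> D"
  shows "summable (\<lambda>k. sqrt (D / real (Suc k)) ^ 3)"
proof -
  have s: "summable (\<lambda>k. real (Suc k) powr (-3/2))"
    using summable_real_powr_iff[of "-3/2"] summable_Suc_iff[of "\<lambda>n. real n powr (-3/2)"] by simp
  have eq: "sqrt (D / real (Suc k)) ^ 3 = sqrt D ^ 3 * real (Suc k) powr (-3/2)" for k
  proof -
    define x where "x = real (Suc k)"
    have x: "x > 0" by (simp add: x_def)
    have "sqrt x ^ 3 = (x powr (1/2)) ^ 3" using x by (subst powr_half_sqrt) auto
    also have "\<dots> = x powr (of_nat 3 * (1/2))" by (rule powr_power) (use x in auto)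
    also have "\<dots> = x powr (3/2)" by simp
    finally have sx: "sqrt x ^ 3 = x powr (3/2)" .
    have "sqrt (D / x) ^ 3 = sqrt D ^ 3 / sqrt x ^ 3"
      by (simp only: real_sqrt_divide power_divide)
    also have "\<dots> = sqrt D ^ 3 * inverse (x powr (3/2))" by (simp only: sx divide_inverse)
    also have "inverse (x powr (3/2)) = x powr (-(3/2))" by (simp only: powr_minus)
    finally show ?thesis by (simp add: x_def)
  qed
  show ?thesis unfolding eq by (intro summable_mult s)
qed

definition Mb :: "real \<Rightarrow> real \<Rightarrow> nat \<Rightarrow> real" where
  "Mb D R k = R ^ 3 * sqrt (D / real (Suc k)) ^ 3 * exp (R * sqrt D + (R * sqrt D)\<^sup>2 / 2)"

lemma summable_Mb: "0 \<le> D \<Longrightarrow> summable (Mb D R)"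
  unfolding Mb_def by (intro summable_mult2 summable_mult summable_sqrt_cube)

lemma H_factor_bound:
  assumes a: "a \<in> Aset D" and z: "cmod z \<le> R"
  shows "cmod (H (z * of_real (a k)) - 1) \<le> Mb D R k"
proof -
  have nn: "0 \<le> a k" using Aset_bound[OF a] by simp
  have w: "cmod (z * of_real (a k)) = cmod z * a k" using nn by (simp add: norm_mult)
  have R0: "0 \<le> R" using z norm_ge_zero order_trans by blast
  have b1: "cmod z * a k \<le> R * sqrt (D / real (Suc k))"
    using Aset_bound(1)[OF a] z nn R0 by (intro mult_mono) auto
  have b2: "cmod z * a k \<le> R * sqrt D"
    using Aset_bound(2)[OF a] z nn R0 by (intro mult_mono) auto
  have "cmod (H (z * of_real (a k)) - 1) \<le> (cmod z * a k) ^ 3 * exp (cmod z * a k + (cmod z * a k)\<^sup>2 / 2)"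
    using H_bound[of "z * of_real (a k)"] w by simp
  also have "\<dots> \<le> (R * sqrt (D / real (Suc k))) ^ 3 * exp (R * sqrt D + (R * sqrt D)\<^sup>2 / 2)"
  proof (rule mult_mono)
    show "(cmod z * a k) ^ 3 \<le> (R * sqrt (D / real (Suc k))) ^ 3"
      using b1 nn by (intro power_mono) auto
    show "exp (cmod z * a k + (cmod z * a k)\<^sup>2 / 2) \<le> exp (R * sqrt D + (R * sqrt D)\<^sup>2 / 2)"
      using b2 nn by (auto intro!: add_mono divide_right_mono power_mono)
  qed (use R0 Aset_D_nonneg[OF a] in auto)
  finally show ?thesis by (simp add: Mb_def power_mult_distrib)
qed

definition Q :: "(nat \<Rightarrow> real) \<Rightarrow> complex \<Rightarrow> complex" where
  "Q a z = (\<Prod>k. H (z * of_real (a k)))"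

lemma cont_coord: "continuous_on UNIV (\<lambda>x::(nat\<Rightarrow>real)\<times>'b::topological_space. fst x n)"
  by (rule continuous_on_product_then_coordinatewise) (rule continuous_on_fst[OF continuous_on_id])

lemma cont_H: "continuous_on S (\<lambda>w. H (g w))" if "continuous_on S g"
  unfolding H_def by (intro continuous_intros that) auto

lemma cont_factor: "continuous_on S (\<lambda>x::(nat\<Rightarrow>real)\<times>complex. H (snd x * of_real (fst x n)))"
proof -
  have "continuous_on UNIV (\<lambda>x::(nat\<Rightarrow>real)\<times>complex. snd x * of_real (fst x n))"
    by (intro continuous_intros cont_coord)
  then have "continuous_on UNIV (\<lambda>x::(nat\<Rightarrow>real)\<times>complex. H (snd x * of_real (fst x n)))"
    by (rule cont_H)
  then show ?thesis using continuous_on_subset by blast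
qed

lemma Q_convergent:
  assumes "a \<in> Aset D"
  shows "convergent_prod (\<lambda>k. H (z * of_real (a k)))"
proof -
  have "summable (\<lambda>k. cmod (H (z * of_real (a k)) - 1))"
  proof (rule summable_comparison_test)
    show "\<exists>N. \<forall>n\<ge>N. norm (cmod (H (z * of_real (a n)) - 1)) \<le> Mb D (cmod z) n"
      using H_factor_bound[OF assms, of z "cmod z"] by auto
    show "summable (Mb D (cmod z))" using summable_Mb Aset_D_nonneg[OF assms] by blast
  qed
  then show ?thesis
    by (intro abs_convergent_prod_imp_convergent_prod) (simp add: abs_convergent_prod_conv_summable)
qed

lemma Q_uniform:
  assumes "compact (Aset D)" and D0: "0 \<le> D"
  shows "uniform_limit (Aset D \<times> cball 0 R) (\<lambda>N x. \<Prod>k<N. H (snd x * of_real (fst x k)))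
           (\<lambda>x. Q (fst x) (snd x)) sequentially"
proof -
  let ?S = "Aset D \<times> cball (0::complex) R"
  have "uniformly_convergent_on ?S (\<lambda>N x. \<Prod>k<N. H (snd x * of_real (fst x k)))"
  proof (rule uniformly_convergent_on_prod')
    show "\<And>n. continuous_on ?S (\<lambda>x. H (snd x * complex_of_real (fst x n)))"
      by (rule cont_factor)
    show "compact ?S" using assms by (intro compact_Times) auto
    show "uniformly_convergent_on ?S (\<lambda>N x. \<Sum>n<N. cmod (H (snd x * complex_of_real (fst x n)) - 1))"
    proof (rule Weierstrass_m_test')
      fix n x assume "x \<in> ?S"
      then show "norm (cmod (H (snd x * complex_of_real (fst x n)) - 1)) \<le> Mb D R n"
        using H_factor_bound[of "fst x" D "snd x" R n] by (auto simp: mem_Times_iff)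
    next
      show "summable (Mb D R)" using summable_Mb D0 by blast
    qed
  qed
  then have ul: "uniform_limit ?S (\<lambda>N x. \<Prod>k<N. H (snd x * of_real (fst x k)))
        (\<lambda>x. lim (\<lambda>N. \<Prod>k<N. H (snd x * of_real (fst x k)))) sequentially"
    by (simp add: uniformly_convergent_uniform_limit_iff)
  have limeq: "lim (\<lambda>N. \<Prod>k<N. H (snd x * of_real (fst x k))) = Q (fst x) (snd x)" if "x \<in> ?S" for x
  proof -
    have "convergent_prod (\<lambda>k. H (snd x * of_real (fst x k)))"
      using that Q_convergent by (auto simp: mem_Times_iff)
    then have "(\<lambda>N. \<Prod>k\<le>N. H (snd x * of_real (fst x k))) \<longlonglongrightarrow> Q (fst x) (snd x)"
      unfolding Q_def by (rule convergent_prod_LIMSEQ)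
    then have "(\<lambda>N. \<Prod>k<N. H (snd x * of_real (fst x k))) \<longlonglongrightarrow> Q (fst x) (snd x)"
      using LIMSEQ_lessThan_iff_atMost by blast
    then show ?thesis by (rule limI)
  qed
  show ?thesis
    using uniform_limit_cong'[of ?S "\<lambda>N x. \<Prod>k<N. H (snd x * of_real (fst x k))"
        "\<lambda>N x. \<Prod>k<N. H (snd x * of_real (fst x k))"
        "\<lambda>x. lim (\<lambda>N. \<Prod>k<N. H (snd x * of_real (fst x k)))" "\<lambda>x. Q (fst x) (snd x)" sequentially]
      ul limeq by blast
qed

lemma cont_sumsq: "continuous_on UNIV (\<lambda>a::nat\<Rightarrow>real. (\<Sum>i<N. (a i)\<^sup>2))"
  by (intro continuous_intros continuous_on_product_coordinates)

lemma closed_Aset_cond: "closed {a::nat\<Rightarrow>real. (\<forall>i. a (Suc i) \<le> a i) \<and> (\<forall>i. 0 \<le> a i) \<and> (\<forall>N. (\<Sum>i<N. (a i)\<^sup>2) \<le> D)}"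
  by (intro closed_Collect_conj closed_Collect_all closed_Collect_le continuous_on_product_coordinates
      cont_sumsq continuous_on_const)

lemma compact_Aset: "compact (Aset D)"
proof -
  let ?B = "PiE UNIV (\<lambda>_::nat. {0..sqrt D})"
  have "compactin (product_topology (\<lambda>i. euclidean) UNIV) ?B" by (simp add: compactin_PiE)
  then have cB: "compact ?B" by (simp add: euclidean_product_topology)
  have "Aset D = ?B \<inter> {a::nat\<Rightarrow>real. (\<forall>i. a (Suc i) \<le> a i) \<and> (\<forall>i. 0 \<le> a i) \<and> (\<forall>N. (\<Sum>i<N. (a i)\<^sup>2) \<le> D)}"
  proof (intro set_eqI iffI)
    fix a assume a: "a \<in> Aset D"
    then show "a \<in> ?B \<inter> {a::nat\<Rightarrow>real. (\<forall>i. a (Suc i) \<le> a i) \<and> (\<forall>i. 0 \<le> a i) \<and> (\<forall>N. (\<Sum>i<N. (a i)\<^sup>2) \<le> D)}"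
      using Aset_bound[OF a] by (auto simp: Aset_def PiE_iff decseq_Suc_iff[symmetric])
  next
    fix a assume "a \<in> ?B \<inter> {a::nat\<Rightarrow>real. (\<forall>i. a (Suc i) \<le> a i) \<and> (\<forall>i. 0 \<le> a i) \<and> (\<forall>N. (\<Sum>i<N. (a i)\<^sup>2) \<le> D)}"
    then show "a \<in> Aset D" by (auto simp: Aset_def decseq_Suc_iff[symmetric])
  qed
  then show ?thesis using compact_Int_closed[OF cB closed_Aset_cond[of D]] by simp
qed

lemma Q_cont: "0 \<le> D \<Longrightarrow> continuous_on (Aset D \<times> cball 0 R) (\<lambda>x. Q (fst x) (snd x))"
proof (rule uniform_limit_theorem[OF _ Q_uniform[OF compact_Aset]])
  show "\<forall>\<^sub>F n in sequentially. continuous_on (Aset D \<times> cball 0 R) (\<lambda>x. \<Prod>k<n. H (snd x * complex_of_real (fst x k)))"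
    by (intro always_eventually allI continuous_on_prod cont_factor)
qed auto

definition F :: "omega \<Rightarrow> complex \<Rightarrow> complex" where
  "F p z = exp (- of_real (fst (snd (snd p))) * z - of_real (snd (snd (snd p))) / 2 * z\<^sup>2)
      * Q (fst p) z * Q (fst (snd p)) (- z)"

lemma F_cont:
  assumes "0 \<le> D"
  shows "continuous_on ((Aset D \<times> Aset D \<times> UNIV) \<times> cball 0 R) (\<lambda>y. F (fst y) (snd y))"
proof -
  let ?T = "(Aset D \<times> Aset D \<times> (UNIV :: (real \<times> real) set)) \<times> cball (0::complex) R"
  have c1: "continuous_on ?T (\<lambda>y. Q (fst (fst y)) (snd y))"
  proof (rule continuous_on_compose2[OF Q_cont[OF assms, of R], of _ "\<lambda>y. (fst (fst y), snd y)", simplified])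
    show "continuous_on ?T (\<lambda>y. (fst (fst y), snd y))" by (intro continuous_intros)
    show "(\<lambda>y. (fst (fst y), snd y)) ` ?T \<subseteq> Aset D \<times> cball 0 R" by (auto simp: mem_Times_iff)
  qed
  have c2: "continuous_on ?T (\<lambda>y. Q (fst (snd (fst y))) (- snd y))"
  proof (rule continuous_on_compose2[OF Q_cont[OF assms, of R], of _ "\<lambda>y. (fst (snd (fst y)), - snd y)", simplified])
    show "continuous_on ?T (\<lambda>y. (fst (snd (fst y)), - snd y))" by (intro continuous_intros)
    show "(\<lambda>y. (fst (snd (fst y)), - snd y)) ` ?T \<subseteq> Aset D \<times> cball 0 R" by (auto simp: mem_Times_iff)
  qed
  show ?thesis unfolding F_def
    by (intro continuous_intros c1 c2) auto
qed

lemma Aset_of_summable: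
  assumes "antimono a" "\<And>i. 0 \<le> a i" "summable (\<lambda>i. (a i)\<^sup>2)"
  shows "a \<in> Aset (\<Sum>i. (a i)\<^sup>2)"
  unfolding Aset_def using assms by (auto intro!: sum_le_suminf)

lemma prod_identity:
  assumes "antimono a" "\<And>i. 0 \<le> a i" "summable (\<lambda>i. (a i)\<^sup>2)"
  shows "(\<Prod>i. exp (z * of_real (a i)) * (1 - z * of_real (a i)))
       = Q a z * exp (- (z\<^sup>2 / 2) * of_real (\<Sum>i. (a i)\<^sup>2))"
proof -
  have aA: "a \<in> Aset (\<Sum>i. (a i)\<^sup>2)" by (rule Aset_of_summable[OF assms])
  have pt: "exp (w) * (1 - w) = H w * exp (- (w\<^sup>2 / 2))" for w :: complex
  proof -
    have e: "exp (w + w\<^sup>2 / 2) * exp (- (w\<^sup>2 / 2)) = exp w" by (simp add: mult_exp_exp)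
    have "H w * exp (- (w\<^sup>2 / 2)) = (exp (w + w\<^sup>2 / 2) * exp (- (w\<^sup>2 / 2))) * (1 - w)"
      unfolding H_def by (simp only: mult_ac)
    then show ?thesis using e by simp
  qed
  have sR: "summable (\<lambda>i. complex_of_real ((a i)\<^sup>2))"
    using assms(3) by (simp only: summable_complex_of_real)
  have sm: "summable (\<lambda>i. - (z\<^sup>2 / 2) * of_real ((a i)\<^sup>2))"
    by (intro summable_mult sR)
  have eqf: "- ((z * of_real (a i))\<^sup>2 / 2) = - (z\<^sup>2 / 2) * of_real ((a i)\<^sup>2)" for i
    by (auto simp: power_mult_distrib)
  have ce: "convergent_prod (\<lambda>i. exp (- ((z * of_real (a i))\<^sup>2 / 2)))"
    unfolding eqf by (rule convergent_prod_exp[OF sm])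
  have pe: "(\<Prod>i. exp (- ((z * of_real (a i))\<^sup>2 / 2))) = exp (- (z\<^sup>2 / 2) * of_real (\<Sum>i. (a i)\<^sup>2))"
  proof -
    have "(\<Prod>i. exp (- ((z * of_real (a i))\<^sup>2 / 2))) = exp (\<Sum>i. - (z\<^sup>2 / 2) * of_real ((a i)\<^sup>2))"
      unfolding eqf by (rule prodinf_exp[OF sm])
    also have "(\<Sum>i. - (z\<^sup>2 / 2) * of_real ((a i)\<^sup>2)) = - (z\<^sup>2 / 2) * (\<Sum>i. of_real ((a i)\<^sup>2))"
      by (rule suminf_mult) (rule sR)
    also have "(\<Sum>i. complex_of_real ((a i)\<^sup>2)) = of_real (\<Sum>i. (a i)\<^sup>2)"
      by (rule suminf_of_real[symmetric]) (rule assms(3))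
    finally show ?thesis .
  qed
  have "(\<Prod>i. exp (z * of_real (a i)) * (1 - z * of_real (a i)))
      = (\<Prod>i. H (z * of_real (a i)) * exp (- ((z * of_real (a i))\<^sup>2 / 2)))"
    by (simp only: pt)
  also have "\<dots> = Q a z * (\<Prod>i. exp (- ((z * of_real (a i))\<^sup>2 / 2)))"
    unfolding Q_def by (rule prodinf_mult[symmetric, OF Q_convergent[OF aA] ce])
  finally show ?thesis using pe by simp
qed

lemma prod_identity_neg:
  assumes "antimono a" "\<And>i. 0 \<le> a i" "summable (\<lambda>i. (a i)\<^sup>2)"
  shows "(\<Prod>i. exp (- z * of_real (a i)) * (1 + z * of_real (a i)))
       = Q a (- z) * exp (- (z\<^sup>2 / 2) * of_real (\<Sum>i. (a i)\<^sup>2))"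
  using prod_identity[OF assms, of "- z"] by simp

lemma E_alt:
  assumes "\<omega> \<in> Omega"
  shows "E \<omega> z = F (Omega_coords \<omega>) z"
proof -
  obtain a b g1 g2 where w: "\<omega> = (a, b, g1, g2)" by (cases \<omega>) auto
  have a: "antimono a" "\<And>i. 0 \<le> a i" "summable (\<lambda>i. (a i)\<^sup>2)"
    and b: "antimono b" "\<And>i. 0 \<le> b i" "summable (\<lambda>i. (b i)\<^sup>2)"
    using assms by (auto simp: w Omega_def)
  define Sa where "Sa = (\<Sum>i. (a i)\<^sup>2)"
  define Sb where "Sb = (\<Sum>i. (b i)\<^sup>2)"
  have "E \<omega> z = exp (- of_real g1 * z - of_real g2 / 2 * z\<^sup>2)
      * (Q a z * exp (- (z\<^sup>2 / 2) * of_real Sa)) * (Q b (- z) * exp (- (z\<^sup>2 / 2) * of_real Sb))"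
    unfolding E_def w using prod_identity[OF a, of z] prod_identity_neg[OF b, of z]
    by (simp add: Sa_def Sb_def)
  also have "\<dots> = (exp (- of_real g1 * z - of_real g2 / 2 * z\<^sup>2) * exp (- (z\<^sup>2 / 2) * of_real Sa)
      * exp (- (z\<^sup>2 / 2) * of_real Sb)) * Q a z * Q b (- z)"
    by (simp add: mult_ac)
  also have "exp (- of_real g1 * z - of_real g2 / 2 * z\<^sup>2) * exp (- (z\<^sup>2 / 2) * of_real Sa)
      * exp (- (z\<^sup>2 / 2) * of_real Sb) = exp (- of_real g1 * z - of_real (g2 + Sa + Sb) / 2 * z\<^sup>2)"
  proof -
    have "(- of_real g1 * z - of_real g2 / 2 * z\<^sup>2) + (- (z\<^sup>2 / 2) * of_real Sa) + (- (z\<^sup>2 / 2) * of_real Sb)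
        = - of_real g1 * z - of_real (g2 + Sa + Sb) / 2 * z\<^sup>2"
      by (simp add: algebra_simps add_divide_distrib)
    then show ?thesis by (simp only: mult_exp_exp)
  qed
  finally show ?thesis
    by (simp add: F_def Omega_coords_def delta_def w Sa_def Sb_def)
qed

lemma Aset_mono: "D \<le> D' \<Longrightarrow> Aset D \<subseteq> Aset D'"
  unfolding Aset_def by (auto intro: order_trans)

lemma coords_Aset:
  assumes "\<omega> \<in> Omega"
  shows "fst (Omega_coords \<omega>) \<in> Aset (delta \<omega>)" "fst (snd (Omega_coords \<omega>)) \<in> Aset (delta \<omega>)"
    "snd (snd (snd (Omega_coords \<omega>))) = delta \<omega>"
proof -
  obtain a b g1 g2 where w: "\<omega> = (a, b, g1, g2)" by (cases \<omega>) auto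
  have a: "antimono a" "\<And>i. 0 \<le> a i" "summable (\<lambda>i. (a i)\<^sup>2)"
    and b: "antimono b" "\<And>i. 0 \<le> b i" "summable (\<lambda>i. (b i)\<^sup>2)" and g2: "0 \<le> g2"
    using assms by (auto simp: w Omega_def)
  have Sa: "0 \<le> (\<Sum>i. (a i)\<^sup>2)" and Sb: "0 \<le> (\<Sum>i. (b i)\<^sup>2)"
    using a b by (auto intro: suminf_nonneg)
  have "a \<in> Aset (\<Sum>i. (a i)\<^sup>2)" by (rule Aset_of_summable[OF a])
  moreover have "(\<Sum>i. (a i)\<^sup>2) \<le> delta \<omega>" using g2 Sb by (simp add: delta_def w)
  ultimately show "fst (Omega_coords \<omega>) \<in> Aset (delta \<omega>)"
    using Aset_mono by (auto simp: Omega_coords_def w)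
  have "b \<in> Aset (\<Sum>i. (b i)\<^sup>2)" by (rule Aset_of_summable[OF b])
  moreover have "(\<Sum>i. (b i)\<^sup>2) \<le> delta \<omega>" using g2 Sa by (simp add: delta_def w)
  ultimately show "fst (snd (Omega_coords \<omega>)) \<in> Aset (delta \<omega>)"
    using Aset_mono by (auto simp: Omega_coords_def w)
  show "snd (snd (snd (Omega_coords \<omega>))) = delta \<omega>" by (simp add: Omega_coords_def w)
qed

lemma delta_nonneg: "\<omega> \<in> Omega \<Longrightarrow> 0 \<le> delta \<omega>"
  using coords_Aset(1) Aset_D_nonneg by blast

lemma Key:
  assumes w0: "\<omega>0 \<in> Omega" and e: "\<epsilon> > 0"
  shows "\<exists>\<eta>>0. \<forall>\<omega>\<in>Omega. dist (Omega_coords \<omega>) (Omega_coords \<omega>0) < \<eta> \<longrightarrow>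
           (\<forall>z\<in>cball 0 R. cmod (E \<omega> z - E \<omega>0 z) < \<epsilon>)"
proof -
  define c0 where "c0 = Omega_coords \<omega>0"
  define D where "D = delta \<omega>0 + 1"
  have D0: "0 \<le> D" using delta_nonneg[OF w0] by (simp add: D_def)
  define T where "T = (Aset D \<times> Aset D \<times> cball (snd (snd c0)) 1) \<times> cball (0::complex) R"
  have cT: "compact T" unfolding T_def
    by (intro compact_Times compact_Aset compact_cball)
  have "continuous_on T (\<lambda>y. F (fst y) (snd y))"
    by (rule continuous_on_subset[OF F_cont[OF D0, of R]]) (auto simp: T_def mem_Times_iff)
  then have "uniformly_continuous_on T (\<lambda>y. F (fst y) (snd y))"
    using cT compact_uniformly_continuous by blast
  then obtain \<eta>1 where \<eta>1: "\<eta>1 > 0"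
    and uc: "\<And>y y'. y \<in> T \<Longrightarrow> y' \<in> T \<Longrightarrow> dist y' y < \<eta>1 \<Longrightarrow> dist (F (fst y') (snd y')) (F (fst y) (snd y)) < \<epsilon>"
    unfolding uniformly_continuous_on_def using e by metis
  have inT: "(Omega_coords \<omega>, z) \<in> T"
    if w: "\<omega> \<in> Omega" and d: "dist (Omega_coords \<omega>) c0 < 1" and z: "z \<in> cball 0 R" for \<omega> z
  proof -
    have d2: "dist (snd (snd (Omega_coords \<omega>))) (snd (snd c0)) < 1"
      using d dist_snd_le[of "snd (Omega_coords \<omega>)" "snd c0"] dist_snd_le[of "Omega_coords \<omega>" c0] by linarith
    then have "dist (snd (snd (snd (Omega_coords \<omega>)))) (snd (snd (snd c0))) < 1"
      using dist_snd_le[of "snd (snd (Omega_coords \<omega>))" "snd (snd c0)"] by linarith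
    then have "delta \<omega> \<le> D"
      using coords_Aset(3)[OF w] coords_Aset(3)[OF w0] by (simp add: D_def c0_def dist_real_def)
    then have "fst (Omega_coords \<omega>) \<in> Aset D" "fst (snd (Omega_coords \<omega>)) \<in> Aset D"
      using coords_Aset[OF w] Aset_mono by blast+
    moreover have "snd (snd (Omega_coords \<omega>)) \<in> cball (snd (snd c0)) 1"
      using d2 by (simp add: dist_commute)
    ultimately show ?thesis using z unfolding T_def mem_Times_iff by simp
  qed
  show ?thesis
  proof (intro exI[of _ "min \<eta>1 1"] conjI ballI impI)
    show "0 < min \<eta>1 1" using \<eta>1 by simp
    fix \<omega> and z :: complex assume w: "\<omega> \<in> Omega" and d: "dist (Omega_coords \<omega>) (Omega_coords \<omega>0) < min \<eta>1 1"
      and z: "z \<in> cball 0 R"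
    have y: "(Omega_coords \<omega>, z) \<in> T" using inT[OF w _ z] d by (simp add: c0_def)
    have y0: "(Omega_coords \<omega>0, z) \<in> T" using inT[OF w0 _ z] by (simp add: c0_def)
    have "dist (Omega_coords \<omega>, z) (Omega_coords \<omega>0, z) < \<eta>1"
      using d by (simp add: dist_Pair_Pair)
    then have "dist (F (Omega_coords \<omega>) z) (F (Omega_coords \<omega>0) z) < \<epsilon>"
      using uc[OF y0 y] by simp
    then show "cmod (E \<omega> z - E \<omega>0 z) < \<epsilon>"
      using E_alt[OF w] E_alt[OF w0] by (simp add: dist_norm)
  qed
qed

lemma topspace_Omega_top: "topspace Omega_top = Omega"
  by (simp add: Omega_top_def topspace_pullback_topology)

lemma topspace_cut: "topspace compact_uniform_top = UNIV"
proof -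
  have "uc_nbhd f {} 1 = UNIV" for f by (auto simp: uc_nbhd_def intro: exI[of _ 0])
  then have "UNIV \<in> {uc_nbhd f K e | f K e. compact K \<and> e > 0}"
    by (metis (mono_tags, lifting) compact_empty mem_Collect_eq zero_less_one)
  then show ?thesis unfolding compact_uniform_top_def by auto
qed

lemma topspace_LP_top: "topspace LP_top = LP"
  by (simp add: LP_top_def topspace_cut)

lemma E_continuous: "continuous_map Omega_top LP_top E"
  unfolding LP_top_def
proof (rule continuous_map_into_subtopology)
  show "E \<in> topspace Omega_top \<rightarrow> LP" by (auto simp: topspace_Omega_top LP_def)
  show "continuous_map Omega_top compact_uniform_top E"
    unfolding compact_uniform_top_def continuous_on_generated_topo_iff
  proof (intro conjI allI impI)
    show "E ` topspace Omega_top \<subseteq> \<Union> {uc_nbhd f K e |f K e. compact K \<and> 0 < e}"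
      using topspace_cut unfolding compact_uniform_top_def by simp
    fix U assume "U \<in> {uc_nbhd f K e |f K e. compact K \<and> 0 < e}"
    then obtain f K e where U: "U = uc_nbhd f K e" and K: "compact K" and e: "0 < e" by blast
    show "openin Omega_top (E -` U \<inter> topspace Omega_top)"
    proof (subst openin_subopen, intro ballI)
      fix \<omega>0 assume "\<omega>0 \<in> E -` U \<inter> topspace Omega_top"
      then have w0: "\<omega>0 \<in> Omega" and "E \<omega>0 \<in> uc_nbhd f K e" by (auto simp: topspace_Omega_top U)
      then obtain d where d: "d < e" and dK: "\<And>z. z \<in> K \<Longrightarrow> cmod (E \<omega>0 z - f z) \<le> d"
        by (auto simp: uc_nbhd_def)
      obtain R where R: "K \<subseteq> cball 0 R"
        using compact_imp_bounded[OF K] bounded_subset_cball by (metis bounded_subset_cball subset_cball bounded_cball order_trans bounded_iff mem_cball_0 subsetI)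
      obtain \<eta> where \<eta>: "\<eta> > 0" and key: "\<And>\<omega>. \<omega> \<in> Omega \<Longrightarrow> dist (Omega_coords \<omega>) (Omega_coords \<omega>0) < \<eta> \<Longrightarrow>
           (\<forall>z\<in>cball 0 R. cmod (E \<omega> z - E \<omega>0 z) < (e - d) / 2)"
        using Key[OF w0, of "(e - d) / 2" R] d by auto
      define W where "W = Omega_coords -` ball (Omega_coords \<omega>0) \<eta> \<inter> Omega"
      have "openin Omega_top W"
        unfolding Omega_top_def openin_pullback_topology W_def by (intro exI[of _ "ball (Omega_coords \<omega>0) \<eta>"]) auto
      moreover have "\<omega>0 \<in> W" using w0 \<eta> by (simp add: W_def)
      moreover have "W \<subseteq> E -` U \<inter> topspace Omega_top"
      proof
        fix \<omega> assume "\<omega> \<in> W"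
        then have w: "\<omega> \<in> Omega" and dd: "dist (Omega_coords \<omega>) (Omega_coords \<omega>0) < \<eta>"
          by (auto simp: W_def dist_commute)
        have "cmod (E \<omega> z - f z) \<le> d + (e - d) / 2" if z: "z \<in> K" for z
        proof -
          have "cmod (E \<omega> z - f z) \<le> cmod (E \<omega> z - E \<omega>0 z) + cmod (E \<omega>0 z - f z)"
            using norm_triangle_ineq[of "E \<omega> z - E \<omega>0 z" "E \<omega>0 z - f z"] by simp
          moreover have "cmod (E \<omega> z - E \<omega>0 z) < (e - d) / 2" using key[OF w dd] z R by auto
          ultimately show ?thesis using dK[OF z] by linarith
        qed
        moreover have "d + (e - d) / 2 < e" using d by (simp add: field_simps)
        ultimately have "E \<omega> \<in> uc_nbhd f K e" unfolding uc_nbhd_def by blast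
        then show "\<omega> \<in> E -` U \<inter> topspace Omega_top" using w by (simp add: U topspace_Omega_top)
      qed
      ultimately show "\<exists>T. openin Omega_top T \<and> \<omega>0 \<in> T \<and> T \<subseteq> E -` U \<inter> topspace Omega_top" by blast
    qed
  qed
qed

lemma Hausdorff_cut: "Hausdorff_space compact_uniform_top"
  unfolding Hausdorff_space_def
proof (intro allI impI)
  fix f g :: "complex \<Rightarrow> complex"
  assume "f \<in> topspace compact_uniform_top \<and> g \<in> topspace compact_uniform_top \<and> f \<noteq> g"
  then obtain z where z: "f z \<noteq> g z" by (meson ext)
  define e where "e = cmod (f z - g z) / 2"
  have e: "e > 0" using z by (simp add: e_def)
  have op: "openin compact_uniform_top (uc_nbhd h {z} e)" for h
    unfolding compact_uniform_top_def
  proof (rule topology_generated_by_Basis)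
    show "uc_nbhd h {z} e \<in> {uc_nbhd f K e |f K e. compact K \<and> 0 < e}"
      using e compact_sing[of z] by blast
  qed
  have fU: "f \<in> uc_nbhd f {z} e" using e by (auto simp: uc_nbhd_def)
  have gV: "g \<in> uc_nbhd g {z} e" using e by (auto simp: uc_nbhd_def)
  have "disjnt (uc_nbhd f {z} e) (uc_nbhd g {z} e)"
    unfolding disjnt_def
  proof (rule equals0I)
    fix h assume "h \<in> uc_nbhd f {z} e \<inter> uc_nbhd g {z} e"
    then have h1: "cmod (h z - f z) < e" and h2: "cmod (h z - g z) < e"
      by (auto simp: uc_nbhd_def)
    have "cmod (f z - g z) \<le> cmod (h z - f z) + cmod (h z - g z)"
      using norm_triangle_ineq[of "f z - h z" "h z - g z"] by (simp add: norm_minus_commute)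
    then show False using h1 h2 by (simp add: e_def)
  qed
  then show "\<exists>U V. openin compact_uniform_top U \<and> openin compact_uniform_top V \<and> f \<in> U \<and> g \<in> V \<and> disjnt U V"
    using op fU gV by blast
qed

lemma Hausdorff_LP_top: "Hausdorff_space LP_top"
  unfolding LP_top_def by (rule Hausdorff_space_subtopology[OF Hausdorff_cut])

lemma compactin_pullback:
  assumes SA: "S \<subseteq> A" and cS: "compact (f ` S)"
  shows "compactin (pullback_topology A f euclidean) S"
  unfolding compactin_def
proof (intro conjI allI impI)
  show "S \<subseteq> topspace (pullback_topology A f euclidean)"
    using SA by (simp add: topspace_pullback_topology)
  fix U assume U: "(\<forall>x\<in>U. openin (pullback_topology A f euclidean) x) \<and> S \<subseteq> \<Union> U"
  then have "\<forall>W\<in>U. \<exists>V. open V \<and> W = f -` V \<inter> A"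
    by (simp add: openin_pullback_topology)
  then obtain V where V: "\<And>W. W \<in> U \<Longrightarrow> open (V W) \<and> W = f -` V W \<inter> A" by metis
  have "f ` S \<subseteq> (\<Union>W\<in>U. V W)"
  proof
    fix y assume "y \<in> f ` S"
    then obtain x where x: "x \<in> S" "y = f x" by blast
    then obtain W where "W \<in> U" "x \<in> W" using U by blast
    then show "y \<in> (\<Union>W\<in>U. V W)" using V x by blast
  qed
  then obtain C' where C': "C' \<subseteq> U" "finite C'" "f ` S \<subseteq> (\<Union>W\<in>C'. V W)"
    using compactE_image[OF cS, of U V] V by blast
  have "S \<subseteq> \<Union> C'"
  proof
    fix x assume x: "x \<in> S"
    then obtain W where "W \<in> C'" "f x \<in> V W" using C' by blast
    moreover have "x \<in> A" using x SA by blast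
    ultimately show "x \<in> \<Union> C'" using V C' by blast
  qed
  then show "\<exists>F. finite F \<and> F \<subseteq> U \<and> S \<subseteq> \<Union> F" using C' by blast
qed

definition Kn :: "nat \<Rightarrow> omega set" where
  "Kn n = {\<omega> \<in> Omega. \<bar>fst (snd (snd \<omega>))\<bar> \<le> real n \<and> delta \<omega> \<le> real n}"

definition Zset :: "omega set" where
  "Zset = {p. \<forall>N. (\<Sum>i<N. (fst p i)\<^sup>2) + (\<Sum>i<N. (fst (snd p) i)\<^sup>2) \<le> snd (snd (snd p))}"

lemma closed_Zset: "closed Zset"
proof -
  have c1: "continuous_on UNIV (\<lambda>p::omega. fst p i)" for i
    by (rule continuous_on_product_then_coordinatewise) (intro continuous_intros)
  have c2: "continuous_on UNIV (\<lambda>p::omega. fst (snd p) i)" for i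
    by (rule continuous_on_product_then_coordinatewise) (intro continuous_intros)
  show ?thesis unfolding Zset_def
    by (intro closed_Collect_all closed_Collect_le continuous_intros c1 c2)
qed

lemma coords_Kn: "Omega_coords ` Kn n = (Aset (real n) \<times> Aset (real n) \<times> cball 0 (real n) \<times> cball 0 (real n)) \<inter> Zset"
proof (intro set_eqI iffI)
  fix p assume "p \<in> Omega_coords ` Kn n"
  then obtain \<omega> where w: "\<omega> \<in> Kn n" and p: "p = Omega_coords \<omega>" by blast
  obtain a b g1 g2 where ws: "\<omega> = (a, b, g1, g2)" by (cases \<omega>) auto
  have wO: "\<omega> \<in> Omega" and g: "\<bar>g1\<bar> \<le> real n" and dn: "delta \<omega> \<le> real n"
    using w by (auto simp: Kn_def ws)
  have a: "antimono a" "\<And>i. 0 \<le> a i" "summable (\<lambda>i. (a i)\<^sup>2)"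
    and b: "antimono b" "\<And>i. 0 \<le> b i" "summable (\<lambda>i. (b i)\<^sup>2)" and g2: "0 \<le> g2"
    using wO by (auto simp: ws Omega_def)
  have pe: "p = (a, b, g1, delta \<omega>)" by (simp add: p ws Omega_coords_def)
  have "a \<in> Aset (real n)" "b \<in> Aset (real n)"
    using coords_Aset[OF wO] Aset_mono[OF dn] by (auto simp: Omega_coords_def ws)
  moreover have "0 \<le> delta \<omega>" using delta_nonneg[OF wO] .
  moreover have "(\<Sum>i<N. (a i)\<^sup>2) + (\<Sum>i<N. (b i)\<^sup>2) \<le> delta \<omega>" for N
  proof -
    have "(\<Sum>i<N. (a i)\<^sup>2) \<le> (\<Sum>i. (a i)\<^sup>2)" using a by (intro sum_le_suminf) auto
    moreover have "(\<Sum>i<N. (b i)\<^sup>2) \<le> (\<Sum>i. (b i)\<^sup>2)" using b by (intro sum_le_suminf) auto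
    ultimately show ?thesis using g2 by (simp add: delta_def ws)
  qed
  ultimately show "p \<in> (Aset (real n) \<times> Aset (real n) \<times> cball 0 (real n) \<times> cball 0 (real n)) \<inter> Zset"
    using g dn by (simp add: pe Zset_def)
next
  fix p assume p: "p \<in> (Aset (real n) \<times> Aset (real n) \<times> cball 0 (real n) \<times> cball 0 (real n)) \<inter> Zset"
  obtain a b g d where ps: "p = (a, b, g, d)" by (cases p) auto
  have aA: "a \<in> Aset (real n)" and bA: "b \<in> Aset (real n)" and g: "\<bar>g\<bar> \<le> real n" and dn: "\<bar>d\<bar> \<le> real n"
    and Z: "\<And>N. (\<Sum>i<N. (a i)\<^sup>2) + (\<Sum>i<N. (b i)\<^sup>2) \<le> d"
    using p by (auto simp: ps Zset_def)
  have a: "antimono a" "\<And>i. 0 \<le> a i" and b: "antimono b" "\<And>i. 0 \<le> b i"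
    using aA bA by (auto simp: Aset_def)
  have sa: "summable (\<lambda>i. (a i)\<^sup>2)"
    using aA by (intro summableI_nonneg_bounded[of _ "real n"]) (auto simp: Aset_def)
  have sb: "summable (\<lambda>i. (b i)\<^sup>2)"
    using bA by (intro summableI_nonneg_bounded[of _ "real n"]) (auto simp: Aset_def)
  have "(\<Sum>i. (a i)\<^sup>2 + (b i)\<^sup>2) \<le> d"
    using summable_add[OF sa sb] Z by (intro suminf_le_const) (auto simp: sum.distrib)
  then have le: "(\<Sum>i. (a i)\<^sup>2) + (\<Sum>i. (b i)\<^sup>2) \<le> d" using suminf_add[OF sa sb] by simp
  define g2 where "g2 = d - (\<Sum>i. (a i)\<^sup>2) - (\<Sum>i. (b i)\<^sup>2)"
  define \<omega> where "\<omega> = (a, b, g, g2)"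
  have wO: "\<omega> \<in> Omega" using a b sa sb le by (simp add: \<omega>_def Omega_def g2_def)
  have dw: "delta \<omega> = d" by (simp add: delta_def \<omega>_def g2_def)
  have "\<omega> \<in> Kn n" using wO dw g dn by (simp add: Kn_def \<omega>_def)
  moreover have "p = Omega_coords \<omega>" using dw by (simp add: Omega_coords_def ps \<omega>_def)
  ultimately show "p \<in> Omega_coords ` Kn n" by blast
qed

lemma compactin_Kn: "compactin Omega_top (Kn n)"
  unfolding Omega_top_def
proof (rule compactin_pullback)
  show "Kn n \<subseteq> Omega" by (auto simp: Kn_def)
  show "compact (Omega_coords ` Kn n)" unfolding coords_Kn
    by (intro compact_Int_closed compact_Times compact_Aset compact_cball closed_Zset)
qed

lemma Union_Kn: "(\<Union>n. Kn n) = topspace Omega_top"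
proof (intro set_eqI iffI)
  fix \<omega> assume "\<omega> \<in> (\<Union>n. Kn n)"
  then show "\<omega> \<in> topspace Omega_top" by (auto simp: Kn_def topspace_Omega_top)
next
  fix \<omega> assume "\<omega> \<in> topspace Omega_top"
  then have w: "\<omega> \<in> Omega" by (simp add: topspace_Omega_top)
  obtain n where n: "max \<bar>fst (snd (snd \<omega>))\<bar> (delta \<omega>) \<le> real n" using real_arch_simple by blast
  then have "\<omega> \<in> Kn n" using w by (simp add: Kn_def)
  then show "\<omega> \<in> (\<Union>n. Kn n)" by blast
qed

definition hf :: "complex \<Rightarrow> complex" where "hf w = exp w * (1 - w)"

lemma hf_H: "hf w = H w * exp (- (w\<^sup>2 / 2))"
proof -
  have e: "exp (w + w\<^sup>2 / 2) * exp (- (w\<^sup>2 / 2)) = exp w" by (simp add: mult_exp_exp)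
  have "H w * exp (- (w\<^sup>2 / 2)) = (exp (w + w\<^sup>2 / 2) * exp (- (w\<^sup>2 / 2))) * (1 - w)"
    unfolding H_def by (simp only: mult_ac)
  then show ?thesis using e by (simp add: hf_def)
qed

lemma H_zero: "H w = 0 \<Longrightarrow> w = 1"
  by (simp add: H_def)

lemma hf_zero: "hf w = 0 \<Longrightarrow> w = 1"
  by (simp add: hf_def)

definition shift :: "omega \<Rightarrow> omega" where
  "shift \<omega> = (\<lambda>i. fst \<omega> (Suc i), \<lambda>i. fst (snd \<omega>) (Suc i), fst (snd (snd \<omega>)), snd (snd (snd \<omega>)))"

lemma antimono_shift: "antimono a \<Longrightarrow> antimono (\<lambda>i. a (Suc i))"
  by (simp add: antimono_def)

lemma shift_Omega: "\<omega> \<in> Omega \<Longrightarrow> shift \<omega> \<in> Omega"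
  by (cases \<omega>) (auto simp: Omega_def shift_def antimono_shift summable_Suc_iff[where f="\<lambda>i. (_ i)\<^sup>2"])

lemma Q_shift:
  assumes "a \<in> Aset D"
  shows "Q a z = H (z * of_real (a 0)) * Q (\<lambda>i. a (Suc i)) z"
proof -
  have "(\<lambda>k. H (z * of_real (a k))) has_prod ((\<Prod>k<1. H (z * of_real (a k))) * (\<Prod>k. H (z * of_real (a (k + 1)))))"
    by (rule has_prod_ignore_initial_segment'[OF Q_convergent[OF assms]])
  then show ?thesis unfolding Q_def using has_prod_unique by fastforce
qed

lemma E_shift:
  assumes w: "\<omega> \<in> Omega"
  shows "E \<omega> z = hf (z * of_real (fst \<omega> 0)) * hf (- z * of_real (fst (snd \<omega>) 0)) * E (shift \<omega>) z"
proof -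
  obtain a b g1 g2 where ws: "\<omega> = (a, b, g1, g2)" by (cases \<omega>) auto
  have a: "antimono a" "\<And>i. 0 \<le> a i" "summable (\<lambda>i. (a i)\<^sup>2)"
    and b: "antimono b" "\<And>i. 0 \<le> b i" "summable (\<lambda>i. (b i)\<^sup>2)"
    using w by (auto simp: ws Omega_def)
  have aA: "a \<in> Aset (\<Sum>i. (a i)\<^sup>2)" and bA: "b \<in> Aset (\<Sum>i. (b i)\<^sup>2)"
    using Aset_of_summable a b by auto
  have sw: "shift \<omega> \<in> Omega" using shift_Omega[OF w] .
  have da: "(\<Sum>i. (a (Suc i))\<^sup>2) = (\<Sum>i. (a i)\<^sup>2) - (a 0)\<^sup>2"
    using suminf_split_head[OF a(3)] by simp
  have db: "(\<Sum>i. (b (Suc i))\<^sup>2) = (\<Sum>i. (b i)\<^sup>2) - (b 0)\<^sup>2"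
    using suminf_split_head[OF b(3)] by simp
  have dsh: "delta (shift \<omega>) = delta \<omega> - (a 0)\<^sup>2 - (b 0)\<^sup>2"
    by (simp add: delta_def shift_def ws da db)
  have E1: "E \<omega> z = exp (- of_real g1 * z - of_real (delta \<omega>) / 2 * z\<^sup>2) * Q a z * Q b (- z)"
    using E_alt[OF w] by (simp add: F_def Omega_coords_def ws)
  have E2: "E (shift \<omega>) z = exp (- of_real g1 * z - of_real (delta \<omega> - (a 0)\<^sup>2 - (b 0)\<^sup>2) / 2 * z\<^sup>2)
      * Q (\<lambda>i. a (Suc i)) z * Q (\<lambda>i. b (Suc i)) (- z)"
    using E_alt[OF sw] dsh by (simp add: F_def Omega_coords_def ws shift_def)
  have ex: "exp (- of_real g1 * z - of_real (delta \<omega>) / 2 * z\<^sup>2)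
     = exp (- ((z * of_real (a 0))\<^sup>2 / 2)) * exp (- ((- z * of_real (b 0))\<^sup>2 / 2))
       * exp (- of_real g1 * z - of_real (delta \<omega> - (a 0)\<^sup>2 - (b 0)\<^sup>2) / 2 * z\<^sup>2)"
  proof -
    have "- of_real g1 * z - of_real (delta \<omega>) / 2 * z\<^sup>2
      = (- ((z * of_real (a 0))\<^sup>2 / 2)) + (- ((- z * of_real (b 0))\<^sup>2 / 2))
       + (- of_real g1 * z - of_real (delta \<omega> - (a 0)\<^sup>2 - (b 0)\<^sup>2) / 2 * z\<^sup>2)"
      by (simp add: algebra_simps power_mult_distrib diff_divide_distrib)
    then show ?thesis by (simp only: mult_exp_exp)
  qed
  show ?thesis
    unfolding E1 E2 ex Q_shift[OF aA, of z] Q_shift[OF bA, of "- z"] hf_H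
    by (simp add: ws mult_ac)
qed

lemma E_cont_z:
  assumes w: "\<omega> \<in> Omega"
  shows "isCont (E \<omega>) z0"
proof -
  define R where "R = cmod z0 + 1"
  define D where "D = delta \<omega>"
  have D0: "0 \<le> D" using delta_nonneg[OF w] by (simp add: D_def)
  have c: "continuous_on (cball 0 R) (\<lambda>z. F (Omega_coords \<omega>) z)"
  proof (rule continuous_on_compose2[OF F_cont[OF D0, of R], of _ "\<lambda>z. (Omega_coords \<omega>, z)", simplified])
    show "continuous_on (cball 0 R) (\<lambda>z. (Omega_coords \<omega>, z))" by (intro continuous_intros)
    show "(\<lambda>z. (Omega_coords \<omega>, z)) ` cball 0 R \<subseteq> (Aset D \<times> Aset D \<times> UNIV) \<times> cball 0 R"
      using coords_Aset[OF w] by (simp add: D_def image_subset_iff mem_Times_iff)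
  qed
  have "z0 \<in> interior (cball 0 R)" by (simp add: R_def)
  then have "continuous (at z0) (\<lambda>z. F (Omega_coords \<omega>) z)" using continuous_on_interior c by blast
  moreover have "E \<omega> = (\<lambda>z. F (Omega_coords \<omega>) z)" using E_alt[OF w] by (simp add: fun_eq_iff)
  ultimately show ?thesis by simp
qed

lemma E_zero_a:
  assumes w: "\<omega> \<in> Omega" and a0: "fst \<omega> 0 > 0"
  shows "E \<omega> (of_real (1 / fst \<omega> 0)) = 0"
proof -
  have "of_real (1 / fst \<omega> 0) * of_real (fst \<omega> 0) = (1::complex)"
    using a0 by (simp add: of_real_mult[symmetric] del: of_real_mult)
  then show ?thesis using E_shift[OF w, of "of_real (1 / fst \<omega> 0)"] by (simp add: hf_def)
qed

lemma E_zero_b: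
  assumes w: "\<omega> \<in> Omega" and b0: "fst (snd \<omega>) 0 > 0"
  shows "E \<omega> (of_real (- 1 / fst (snd \<omega>) 0)) = 0"
proof -
  have "- of_real (- 1 / fst (snd \<omega>) 0) * of_real (fst (snd \<omega>) 0) = (1::complex)"
    using b0 by (simp add: of_real_mult[symmetric] del: of_real_mult)
  then show ?thesis using E_shift[OF w, of "of_real (- 1 / fst (snd \<omega>) 0)"] by (simp add: hf_def)
qed

lemma Q_nonzero_real:
  assumes a: "a \<in> Aset D" and x: "\<And>i. x * a i \<noteq> 1"
  shows "Q a (of_real x) \<noteq> 0"
  unfolding Q_def
proof (rule prodinf_nonzero[OF Q_convergent[OF a]])
  fix i show "H (of_real x * of_real (a i)) \<noteq> 0"
  proof
    assume "H (of_real x * of_real (a i)) = 0"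
    then have "of_real x * of_real (a i) = (1::complex)" by (rule H_zero)
    then have "x * a i = 1" by (metis of_real_1 of_real_eq_iff of_real_mult)
    then show False using x by blast
  qed
qed

lemma coords_simps:
  "fst (Omega_coords \<omega>) = fst \<omega>" "fst (snd (Omega_coords \<omega>)) = fst (snd \<omega>)"
  "fst (snd (snd (Omega_coords \<omega>))) = fst (snd (snd \<omega>))"
  "snd (snd (snd (Omega_coords \<omega>))) = delta \<omega>"
  by (cases \<omega>; simp add: Omega_coords_def)+

lemma E_real_form:
  assumes w: "\<omega> \<in> Omega"
  shows "E \<omega> (of_real x) = of_real (exp (- fst (snd (snd \<omega>)) * x - delta \<omega> / 2 * x\<^sup>2))
     * Q (fst \<omega>) (of_real x) * Q (fst (snd \<omega>)) (- of_real x)"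
proof -
  have arg: "- of_real (fst (snd (snd \<omega>))) * of_real x - of_real (delta \<omega>) / 2 * (of_real x)\<^sup>2
      = (of_real (- fst (snd (snd \<omega>)) * x - delta \<omega> / 2 * x\<^sup>2) :: complex)" by simp
  have "E \<omega> (of_real x) = exp (- of_real (fst (snd (snd \<omega>))) * of_real x - of_real (delta \<omega>) / 2 * (of_real x)\<^sup>2)
     * Q (fst \<omega>) (of_real x) * Q (fst (snd \<omega>)) (- of_real x)"
    using E_alt[OF w, of "of_real x"] by (simp only: F_def coords_simps)
  also have "exp (- of_real (fst (snd (snd \<omega>))) * of_real x - of_real (delta \<omega>) / 2 * (of_real x)\<^sup>2)
      = (of_real (exp (- fst (snd (snd \<omega>)) * x - delta \<omega> / 2 * x\<^sup>2)) :: complex)"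
    by (simp only: arg exp_of_real)
  finally show ?thesis .
qed

lemma E_nonzero_real:
  assumes w: "\<omega> \<in> Omega" and xa: "\<And>i. x * fst \<omega> i \<noteq> 1" and xb: "\<And>i. (- x) * fst (snd \<omega>) i \<noteq> 1"
  shows "E \<omega> (of_real x) \<noteq> 0"
proof -
  have "Q (fst \<omega>) (of_real x) \<noteq> 0" using coords_Aset(1)[OF w] unfolding coords_simps
    by (rule Q_nonzero_real) (rule xa)
  moreover have "Q (fst (snd \<omega>)) (of_real (- x)) \<noteq> 0" using coords_Aset(2)[OF w] unfolding coords_simps
    by (rule Q_nonzero_real) (rule xb)
  ultimately show ?thesis using E_real_form[OF w, of x] by simp
qed

lemma Omega_facts:
  assumes "\<omega> \<in> Omega"
  shows "\<And>i. 0 \<le> fst \<omega> i" "\<And>i. 0 \<le> fst (snd \<omega>) i" "\<And>i. fst \<omega> i \<le> fst \<omega> 0" "\<And>i. fst (snd \<omega>) i \<le> fst (snd \<omega>) 0"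
  using assms by (auto simp: Omega_def antimono_def split: prod.splits)

lemma first_le_a:
  assumes w: "\<omega> \<in> Omega" and w': "\<omega>' \<in> Omega" and eq: "E \<omega> = E \<omega>'"
  shows "fst \<omega> 0 \<le> fst \<omega>' 0"
proof (rule ccontr)
  assume "\<not> fst \<omega> 0 \<le> fst \<omega>' 0"
  then have lt: "fst \<omega>' 0 < fst \<omega> 0" by simp
  have a0: "fst \<omega> 0 > 0" using lt Omega_facts(1)[OF w', of 0] by linarith
  define x where "x = 1 / fst \<omega> 0"
  have x0: "x > 0" using a0 by (simp add: x_def)
  have "E \<omega>' (of_real x) \<noteq> 0"
  proof (rule E_nonzero_real[OF w'])
    fix i
    have "x * fst \<omega>' i \<le> x * fst \<omega>' 0" using Omega_facts(3)[OF w'] x0 by (simp add: mult_left_mono)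
    also have "\<dots> < x * fst \<omega> 0" using lt x0 by simp
    also have "\<dots> = 1" using a0 by (simp add: x_def)
    finally show "x * fst \<omega>' i \<noteq> 1" by simp
    have "(- x) * fst (snd \<omega>') i \<le> 0" using Omega_facts(2)[OF w'] x0 by (simp add: mult_nonneg_nonneg)
    then show "(- x) * fst (snd \<omega>') i \<noteq> 1" by linarith
  qed
  moreover have "E \<omega> (of_real x) = 0" using E_zero_a[OF w a0] by (simp add: x_def)
  ultimately show False using eq by simp
qed

lemma first_le_b:
  assumes w: "\<omega> \<in> Omega" and w': "\<omega>' \<in> Omega" and eq: "E \<omega> = E \<omega>'"
  shows "fst (snd \<omega>) 0 \<le> fst (snd \<omega>') 0"
proof (rule ccontr)
  assume "\<not> fst (snd \<omega>) 0 \<le> fst (snd \<omega>') 0"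
  then have lt: "fst (snd \<omega>') 0 < fst (snd \<omega>) 0" by simp
  have b0: "fst (snd \<omega>) 0 > 0" using lt Omega_facts(2)[OF w', of 0] by linarith
  define x where "x = - 1 / fst (snd \<omega>) 0"
  have x0: "x < 0" using b0 by (simp add: x_def)
  have "E \<omega>' (of_real x) \<noteq> 0"
  proof (rule E_nonzero_real[OF w'])
    fix i
    have "x * fst \<omega>' i \<le> 0" using Omega_facts(1)[OF w'] x0 by (simp add: mult_nonpos_nonneg)
    then show "x * fst \<omega>' i \<noteq> 1" by linarith
    have "(- x) * fst (snd \<omega>') i \<le> (- x) * fst (snd \<omega>') 0" using Omega_facts(4)[OF w'] x0 by (simp add: mult_left_mono)
    also have "\<dots> < (- x) * fst (snd \<omega>) 0" using lt x0 by simp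
    also have "\<dots> = 1" using b0 by (simp add: x_def)
    finally show "(- x) * fst (snd \<omega>') i \<noteq> 1" by simp
  qed
  moreover have "E \<omega> (of_real x) = 0" using E_zero_b[OF w b0] by (simp add: x_def)
  ultimately show False using eq by simp
qed

lemma hf_nonzero_nonreal:
  assumes "Im c \<noteq> 0"
  shows "hf (c * of_real r) \<noteq> 0"
proof
  assume "hf (c * of_real r) = 0"
  then have e: "c * of_real r = 1" by (rule hf_zero)
  then have "Im (c * of_real r) = 0" by simp
  then have "Im c * r = 0" by simp
  then have "r = 0" using assms by simp
  then show False using e by simp
qed

lemma shift_eq:
  assumes w: "\<omega> \<in> Omega" and w': "\<omega>' \<in> Omega" and eq: "E \<omega> = E \<omega>'"
    and a: "fst \<omega> 0 = fst \<omega>' 0" and b: "fst (snd \<omega>) 0 = fst (snd \<omega>') 0"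
  shows "E (shift \<omega>) = E (shift \<omega>')"
proof
  fix z0 :: complex
  define s where "s = (if Im z0 \<ge> 0 then 1 else -1 :: real)"
  define r where "r n = s * inverse (real (Suc n))" for n
  define zn where "zn n = z0 + \<i> * of_real (r n)" for n
  have Imz: "Im (zn n) \<noteq> 0" for n
  proof -
    have im: "Im (zn n) = Im z0 + r n" by (simp add: zn_def)
    show ?thesis
    proof (cases "Im z0 \<ge> 0")
      case True
      then have "r n > 0" by (simp add: r_def s_def)
      then show ?thesis using im True by linarith
    next
      case False
      then have "r n < 0" by (simp add: r_def s_def)
      then show ?thesis using im False by linarith
    qed
  qed
  have eqn: "E (shift \<omega>) (zn n) = E (shift \<omega>') (zn n)" for n
  proof -
    have n1: "hf (zn n * of_real (fst \<omega> 0)) \<noteq> 0" by (rule hf_nonzero_nonreal[OF Imz])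
    have n2: "hf (- zn n * of_real (fst (snd \<omega>) 0)) \<noteq> 0"
      by (rule hf_nonzero_nonreal) (use Imz[of n] in simp)
    define c where "c = hf (zn n * of_real (fst \<omega> 0)) * hf (- zn n * of_real (fst (snd \<omega>) 0))"
    have "c * E (shift \<omega>) (zn n) = E \<omega> (zn n)" by (simp only: E_shift[OF w] c_def)
    also have "\<dots> = E \<omega>' (zn n)" using eq by simp
    also have "\<dots> = c * E (shift \<omega>') (zn n)" by (simp only: E_shift[OF w'] c_def a b)
    finally have "c * E (shift \<omega>) (zn n) = c * E (shift \<omega>') (zn n)" .
    moreover have "c \<noteq> 0" using n1 n2 by (simp add: c_def)
    ultimately show ?thesis by simp
  qed
  have "(\<lambda>n. z0 + \<i> * of_real (s * inverse (real (Suc n)))) \<longlonglongrightarrow> z0 + \<i> * of_real (s * 0)"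
    by (intro tendsto_intros LIMSEQ_inverse_real_of_nat)
  then have lim: "zn \<longlonglongrightarrow> z0" by (simp add: zn_def[abs_def] r_def)
  have l1: "(\<lambda>n. E (shift \<omega>) (zn n)) \<longlonglongrightarrow> E (shift \<omega>) z0"
    by (rule isCont_tendsto_compose[OF E_cont_z[OF shift_Omega[OF w]] lim])
  have l2: "(\<lambda>n. E (shift \<omega>') (zn n)) \<longlonglongrightarrow> E (shift \<omega>') z0"
    by (rule isCont_tendsto_compose[OF E_cont_z[OF shift_Omega[OF w']] lim])
  show "E (shift \<omega>) z0 = E (shift \<omega>') z0"
  proof -
    have fe: "(\<lambda>n. E (shift \<omega>') (zn n)) = (\<lambda>n. E (shift \<omega>) (zn n))" using eqn by simp
    have l2': "(\<lambda>n. E (shift \<omega>) (zn n)) \<longlonglongrightarrow> E (shift \<omega>') z0" using l2 unfolding fe .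
    show ?thesis by (rule LIMSEQ_unique[OF l1 l2'])
  qed
qed

lemma coeff_eq:
  "\<forall>\<omega> \<omega>'. \<omega> \<in> Omega \<longrightarrow> \<omega>' \<in> Omega \<longrightarrow> E \<omega> = E \<omega>' \<longrightarrow>
     fst \<omega> k = fst \<omega>' k \<and> fst (snd \<omega>) k = fst (snd \<omega>') k"
proof (induction k)
  case 0
  show ?case
  proof (intro allI impI)
    fix \<omega> \<omega>' assume w: "\<omega> \<in> Omega" and w': "\<omega>' \<in> Omega" and eq: "E \<omega> = E \<omega>'"
    show "fst \<omega> 0 = fst \<omega>' 0 \<and> fst (snd \<omega>) 0 = fst (snd \<omega>') 0"
      using first_le_a[OF w w' eq] first_le_a[OF w' w eq[symmetric]]
        first_le_b[OF w w' eq] first_le_b[OF w' w eq[symmetric]] by simp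
  qed
next
  case (Suc k)
  show ?case
  proof (intro allI impI)
    fix \<omega> \<omega>' assume w: "\<omega> \<in> Omega" and w': "\<omega>' \<in> Omega" and eq: "E \<omega> = E \<omega>'"
    have "fst \<omega> 0 = fst \<omega>' 0 \<and> fst (snd \<omega>) 0 = fst (snd \<omega>') 0"
      using first_le_a[OF w w' eq] first_le_a[OF w' w eq[symmetric]]
        first_le_b[OF w w' eq] first_le_b[OF w' w eq[symmetric]] by simp
    then have "E (shift \<omega>) = E (shift \<omega>')" using shift_eq[OF w w' eq] by simp
    then have "fst (shift \<omega>) k = fst (shift \<omega>') k \<and> fst (snd (shift \<omega>)) k = fst (snd (shift \<omega>')) k"
      using Suc.IH shift_Omega[OF w] shift_Omega[OF w'] by blast
    then show "fst \<omega> (Suc k) = fst \<omega>' (Suc k) \<and> fst (snd \<omega>) (Suc k) = fst (snd \<omega>') (Suc k)"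
      by (simp add: shift_def)
  qed
qed

lemma exponent_eq:
  assumes w: "\<omega> \<in> Omega" and w': "\<omega>' \<in> Omega" and eq: "E \<omega> = E \<omega>'"
    and fa: "fst \<omega> = fst \<omega>'" and fb: "fst (snd \<omega>) = fst (snd \<omega>')"
    and xa: "\<And>i. x * fst \<omega> i \<noteq> 1" and xb: "\<And>i. (- x) * fst (snd \<omega>) i \<noteq> 1"
  shows "- fst (snd (snd \<omega>)) * x - delta \<omega> / 2 * x\<^sup>2 = - fst (snd (snd \<omega>')) * x - delta \<omega>' / 2 * x\<^sup>2"
proof -
  have qa: "Q (fst \<omega>) (of_real x) \<noteq> 0" using coords_Aset(1)[OF w] unfolding coords_simps
    by (rule Q_nonzero_real) (rule xa)
  have qb: "Q (fst (snd \<omega>)) (of_real (- x)) \<noteq> 0" using coords_Aset(2)[OF w] unfolding coords_simps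
    by (rule Q_nonzero_real) (rule xb)
  define QQ where "QQ = Q (fst \<omega>) (of_real x) * Q (fst (snd \<omega>)) (- of_real x)"
  have L: "E \<omega> (of_real x) = (of_real (exp (- fst (snd (snd \<omega>)) * x - delta \<omega> / 2 * x\<^sup>2)) :: complex) * QQ"
    using E_real_form[OF w, of x] unfolding QQ_def by (simp only: mult.assoc)
  have R: "E \<omega>' (of_real x) = (of_real (exp (- fst (snd (snd \<omega>')) * x - delta \<omega>' / 2 * x\<^sup>2)) :: complex) * QQ"
    using E_real_form[OF w', of x] unfolding QQ_def fa[symmetric] fb[symmetric] by (simp only: mult.assoc)
  have "(of_real (exp (- fst (snd (snd \<omega>)) * x - delta \<omega> / 2 * x\<^sup>2)) :: complex) * QQ = E \<omega> (of_real x)"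
    using L by simp
  also have "\<dots> = E \<omega>' (of_real x)" using eq by simp
  also have "\<dots> = (of_real (exp (- fst (snd (snd \<omega>')) * x - delta \<omega>' / 2 * x\<^sup>2)) :: complex) * QQ"
    by (rule R)
  finally have P: "(of_real (exp (- fst (snd (snd \<omega>)) * x - delta \<omega> / 2 * x\<^sup>2)) :: complex) * QQ
    = (of_real (exp (- fst (snd (snd \<omega>')) * x - delta \<omega>' / 2 * x\<^sup>2)) :: complex) * QQ" .
  have nz: "QQ \<noteq> 0" using qa qb by (simp add: QQ_def)
  have "(of_real (exp (- fst (snd (snd \<omega>)) * x - delta \<omega> / 2 * x\<^sup>2)) :: complex)
      = of_real (exp (- fst (snd (snd \<omega>')) * x - delta \<omega>' / 2 * x\<^sup>2))"
    using P nz mult_cancel_right by blast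
  then show ?thesis by (simp only: of_real_eq_iff exp_inj_iff)
qed

lemma delta_split: "delta \<omega> = snd (snd (snd \<omega>)) + (\<Sum>i. (fst \<omega> i)\<^sup>2) + (\<Sum>i. (fst (snd \<omega>) i)\<^sup>2)"
  by (cases \<omega>) (simp add: delta_def)

lemma E_inj: "inj_on E Omega"
proof (rule inj_onI)
  fix \<omega> \<omega>' assume w: "\<omega> \<in> Omega" and w': "\<omega>' \<in> Omega" and eq: "E \<omega> = E \<omega>'"
  have ck: "\<forall>k. fst \<omega> k = fst \<omega>' k \<and> fst (snd \<omega>) k = fst (snd \<omega>') k"
    using coeff_eq w w' eq by blast
  then have fa: "fst \<omega> = fst \<omega>'" and fb: "fst (snd \<omega>) = fst (snd \<omega>')"
    by (simp_all add: fun_eq_iff)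
  define t where "t = 1 / (1 + fst \<omega> 0 + fst (snd \<omega>) 0)"
  have a0: "0 \<le> fst \<omega> 0" and b0: "0 \<le> fst (snd \<omega>) 0" using Omega_facts[OF w] by auto
  have t0: "t > 0" using a0 b0 by (simp add: t_def)
  have ta: "t * fst \<omega> 0 < 1" and tb: "t * fst (snd \<omega>) 0 < 1"
    using a0 b0 by (simp_all add: t_def field_simps)
  have e1: "- fst (snd (snd \<omega>)) * t - delta \<omega> / 2 * t\<^sup>2 = - fst (snd (snd \<omega>')) * t - delta \<omega>' / 2 * t\<^sup>2"
  proof (rule exponent_eq[OF w w' eq fa fb])
    fix i
    have "t * fst \<omega> i \<le> t * fst \<omega> 0" using Omega_facts(3)[OF w] t0 by (simp add: mult_left_mono)
    then show "t * fst \<omega> i \<noteq> 1" using ta by linarith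
    have "(- t) * fst (snd \<omega>) i \<le> 0" using Omega_facts(2)[OF w] t0 by (simp add: mult_nonneg_nonneg)
    then show "(- t) * fst (snd \<omega>) i \<noteq> 1" by linarith
  qed
  have e2: "- fst (snd (snd \<omega>)) * (- t) - delta \<omega> / 2 * (- t)\<^sup>2 = - fst (snd (snd \<omega>')) * (- t) - delta \<omega>' / 2 * (- t)\<^sup>2"
  proof (rule exponent_eq[OF w w' eq fa fb])
    fix i
    have "(- t) * fst \<omega> i \<le> 0" using Omega_facts(1)[OF w] t0 by (simp add: mult_nonneg_nonneg)
    then show "(- t) * fst \<omega> i \<noteq> 1" by linarith
    have "t * fst (snd \<omega>) i \<le> t * fst (snd \<omega>) 0" using Omega_facts(4)[OF w] t0 by (simp add: mult_left_mono)
    then show "(- (- t)) * fst (snd \<omega>) i \<noteq> 1" using tb by simp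
  qed
  define g where "g = fst (snd (snd \<omega>))"
  define g' where "g' = fst (snd (snd \<omega>'))"
  define d where "d = delta \<omega>"
  define d' where "d' = delta \<omega>'"
  have e1': "- g * t - d / 2 * t\<^sup>2 = - g' * t - d' / 2 * t\<^sup>2" using e1 by (simp add: g_def g'_def d_def d'_def)
  have e2': "g * t - d / 2 * t\<^sup>2 = g' * t - d' / 2 * t\<^sup>2" using e2 by (simp add: g_def g'_def d_def d'_def)
  have "g * t = g' * t" using e1' e2' by linarith
  then have gg: "g = g'" using t0 by simp
  have "d * t\<^sup>2 = d' * t\<^sup>2" using e1' e2' by linarith
  then have dd: "d = d'" using t0 by simp
  have "snd (snd (snd \<omega>)) = snd (snd (snd \<omega>'))"
    using delta_split[of \<omega>] delta_split[of \<omega>'] dd fa fb by (simp add: d_def d'_def)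
  then show "\<omega> = \<omega>'" using fa fb gg by (simp add: g_def g'_def prod_eq_iff)
qed

theorem proposition5p6:
  shows "E \<in> borel_of Omega_top \<rightarrow>\<^sub>M borel_of LP_top
    \<and> (\<forall>\<nu>\<in>Mp Omega_top. distr \<nu> (borel_of LP_top) E \<in> Mp LP_top)
    \<and> bij_betw (\<lambda>\<nu>. distr \<nu> (borel_of LP_top) E) (Mp Omega_top) (Mp LP_top)"
proof (rule pushforward_bij[OF E_continuous _ _ compactin_Kn Union_Kn Hausdorff_LP_top])
  show "inj_on E (topspace Omega_top)" using E_inj by (simp add: topspace_Omega_top)
  show "E ` topspace Omega_top = topspace LP_top" by (simp add: topspace_Omega_top topspace_LP_top LP_def)
qed

end
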